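(* (1) If $\mathbb{E}\min(Z,W)<\infty$, then $\sup_{n\in\mathbb{N}}|R_n|<\infty$ almost surely. (2) If $\mathbb{E}\min(Z,W)=\infty$, then $\sup_{n\in\mathbb{N}}|R_n|=\infty$ almost surely.
   Context: Let $Z,W,(Z_n)_{n\ge1},(W_n)_{n\ge1}$ be independent, identically distributed random variables taking values in $\mathbb{N}=\{1,2,3,\dots\}$. Define sets $T_n\subset\mathbb{Z}$ recursively by $T_n=\{n\}$ for $n\le 0$ and $T_n=\{n\}\cup T_{n-Z_n}\cup T_{n-W_n}$ for $n\ge1$. Let $\mathcal{L}_n=T_n\cap\{0,-1,-2,\dots\}$ and $R_n=\max\mathcal{L}_n$. *)

theory Defs
  imports "HOL-Probability.Probability"
begin

text \<open>Given sample sequences z w (z n = Z_n, w n = W_n), reach z w n m means m \<in> T_n,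
  where T_n = {n} for n \<le> 0 and T_n = {n} \<union> T_(n - Z_n) \<union> T_(n - W_n) for n \<ge> 1
  (least solution of the recursion).\<close>
inductive reach :: "(nat \<Rightarrow> nat) \<Rightarrow> (nat \<Rightarrow> nat) \<Rightarrow> int \<Rightarrow> int \<Rightarrow> bool"
  for z w :: "nat \<Rightarrow> nat" where
  refl: "reach z w n n"
| stepZ: "n \<ge> 1 \<Longrightarrow> reach z w (n - int (z (nat n))) m \<Longrightarrow> reach z w n m"
| stepW: "n \<ge> 1 \<Longrightarrow> reach z w (n - int (w (nat n))) m \<Longrightarrow> reach z w n m"

definition Tset :: "(nat \<Rightarrow> nat) \<Rightarrow> (nat \<Rightarrow> nat) \<Rightarrow> int \<Rightarrow> int set" where
  "Tset z w n = {m. reach z w n m}"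

definition Lset :: "(nat \<Rightarrow> nat) \<Rightarrow> (nat \<Rightarrow> nat) \<Rightarrow> int \<Rightarrow> int set" where
  "Lset z w n = Tset z w n \<inter> {..0}"

definition Rval :: "(nat \<Rightarrow> nat) \<Rightarrow> (nat \<Rightarrow> nat) \<Rightarrow> int \<Rightarrow> int" where
  "Rval z w n = Max (Lset z w n)"

end

theory Submission imports Defs begin

lemma reach_iff: "reach z w n m \<longleftrightarrow> m = n \<or> (n \<ge> 1 \<and> (reach z w (n - int (z (nat n))) m \<or> reach z w (n - int (w (nat n))) m))"
  by (subst reach.simps) auto

lemma reach_nonpos: "n \<le> 0 \<Longrightarrow> reach z w n m \<longleftrightarrow> m = n"
  by (subst reach_iff) auto

lemma finite_T:
  assumes "\<And>k. z k \<ge> 1" "\<And>k. w k \<ge> 1"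
  shows "finite (Tset z w n)"
proof (induction "nat n" arbitrary: n rule: less_induct)
  case less
  show ?case
  proof (cases "n \<ge> 1")
    case False
    then have "Tset z w n = {n}" unfolding Tset_def using reach_nonpos[of n z w] by auto
    then show ?thesis by simp
  next
    case True
    have "Tset z w n = insert n (Tset z w (n - int (z (nat n))) \<union> Tset z w (n - int (w (nat n))))"
      unfolding Tset_def using True by (intro set_eqI, simp only: mem_Collect_eq, subst reach_iff) auto
    moreover have "finite (Tset z w (n - int (z (nat n))))"
      using less[of "n - int (z (nat n))"] assms(1)[of "nat n"] True by linarith
    moreover have "finite (Tset z w (n - int (w (nat n))))"
      using less[of "n - int (w (nat n))"] assms(2)[of "nat n"] True by linarith
    ultimately show ?thesis by simp
  qed
qed

lemma leaf1:
  assumes pz: "\<And>k. z k \<ge> 1" and pw: "\<And>k. w k \<ge> 1" and N: "\<And>k. k \<ge> N \<Longrightarrow> min (z k) (w k) < k"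
  shows "n \<ge> 1 \<Longrightarrow> \<exists>m. reach z w n m \<and> m \<le> 0 \<and> m \<ge> - (\<Sum>k<N. int (z k))"
proof (induction "nat n" arbitrary: n rule: less_induct)
  case less
  define k where "k = nat n"
  have nk: "n = int k" using less.prems k_def by simp
  show ?case
  proof (cases "k \<ge> N")
    case True
    then have "z k < k \<or> w k < k" using N[of k] by linarith
    then show ?thesis
    proof
      assume h: "z k < k"
      then obtain m where "reach z w (n - int (z k)) m \<and> m \<le> 0 \<and> m \<ge> - (\<Sum>k<N. int (z k))"
        using less.hyps[of "n - int (z k)"] nk pz[of k] h by fastforce
      then show ?thesis using reach.stepZ[of n z w m] less.prems k_def by auto
    next
      assume h: "w k < k"
      then obtain m where "reach z w (n - int (w k)) m \<and> m \<le> 0 \<and> m \<ge> - (\<Sum>k<N. int (z k))"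
        using less.hyps[of "n - int (w k)"] nk pw[of k] h by fastforce
      then show ?thesis using reach.stepW[of n z w m] less.prems k_def by auto
    qed
  next
    case False
    have zle: "int (z k) \<le> (\<Sum>k<N. int (z k))"
      using False by (intro member_le_sum) auto
    show ?thesis
    proof (cases "n - int (z k) \<ge> 1")
      case True
      then obtain m where "reach z w (n - int (z k)) m \<and> m \<le> 0 \<and> m \<ge> - (\<Sum>k<N. int (z k))"
        using less.hyps[of "n - int (z k)"] nk pz[of k] True by fastforce
      then show ?thesis using reach.stepZ[of n z w m] less.prems k_def by auto
    next
      case False
      then show ?thesis using reach.stepZ[of n z w "n - int (z k)"] reach.refl[of z w "n - int (z k)"]
          less.prems k_def zle by (intro exI[of _ "n - int (z k)"]) auto
    qed
  qed
qed

lemma bound1: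
  assumes "\<And>k. z k \<ge> 1" "\<And>k. w k \<ge> 1" and N: "\<And>k. k \<ge> N \<Longrightarrow> min (z k) (w k) < k"
    and n: "n \<ge> 1"
  shows "\<bar>Rval z w n\<bar> \<le> (\<Sum>k<N. int (z k))"
proof -
  obtain m where m: "reach z w n m" "m \<le> 0" "m \<ge> - (\<Sum>k<N. int (z k))"
    using leaf1[OF assms(1,2) N n] by blast
  have fin: "finite (Lset z w n)" unfolding Lset_def using finite_T[OF assms(1,2)] by simp
  have mem: "m \<in> Lset z w n" using m unfolding Lset_def Tset_def by auto
  have "Rval z w n \<ge> m" unfolding Rval_def using fin mem by (rule Max_ge)
  moreover have "Rval z w n \<in> Lset z w n" unfolding Rval_def using fin mem by (intro Max_in) auto
  then have "Rval z w n \<le> 0" unfolding Lset_def by auto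
  ultimately show ?thesis using m by linarith
qed

lemma bound2:
  assumes n: "n \<ge> 1" and B: "B \<ge> 0" and hz: "int (z (nat n)) > n + B" and hw: "int (w (nat n)) > n + B"
  shows "\<bar>Rval z w n\<bar> > B"
proof -
  have "Tset z w n = {n, n - int (z (nat n)), n - int (w (nat n))}"
    unfolding Tset_def using n hz hw B
    by (intro set_eqI, simp only: mem_Collect_eq, subst reach_iff) (auto simp: reach_nonpos)
  then have "Lset z w n = {n - int (z (nat n)), n - int (w (nat n))}"
    unfolding Lset_def using n hz hw B by auto
  then have "Rval z w n = max (n - int (z (nat n))) (n - int (w (nat n)))"
    unfolding Rval_def by simp
  then show ?thesis using hz hw B by simp
qed

lemma ennreal_nat_suminf: "ennreal (real (n::nat)) = (\<Sum>k. if k < n then 1 else 0)"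
proof -
  have "(\<Sum>k. (if k < n then 1 else 0::ennreal)) = (\<Sum>k<n. (if k < n then 1 else 0))"
    by (rule suminf_finite) auto
  then show ?thesis by (simp add: ennreal_of_nat_eq_real_of_nat)
qed

theorem theorem4:
  fixes M :: "'a measure" and Z W :: "nat \<Rightarrow> 'a \<Rightarrow> nat"
  assumes "prob_space M"
    and pos: "\<And>n x. x \<in> space M \<Longrightarrow> Z n x \<ge> 1 \<and> W n x \<ge> 1"
    and indep: "prob_space.indep_vars M (\<lambda>_. count_space UNIV)
                  (\<lambda>i. case i of Inl n \<Rightarrow> Z n | Inr n \<Rightarrow> W n) UNIV"
    and idZ: "\<And>n. distr M (count_space UNIV) (Z n) = distr M (count_space UNIV) (Z 0)"
    and idW: "\<And>n. distr M (count_space UNIV) (W n) = distr M (count_space UNIV) (Z 0)"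
  shows "((\<integral>\<^sup>+ x. ennreal (real (min (Z 0 x) (W 0 x))) \<partial>M) < \<infinity> \<longrightarrow>
            (AE x in M. \<exists>B::int. \<forall>n::nat. n \<ge> 1 \<longrightarrow>
                \<bar>Rval (\<lambda>k. Z k x) (\<lambda>k. W k x) (int n)\<bar> \<le> B))
       \<and> ((\<integral>\<^sup>+ x. ennreal (real (min (Z 0 x) (W 0 x))) \<partial>M) = \<infinity> \<longrightarrow>
            (AE x in M. \<forall>B::int. \<exists>n::nat. n \<ge> 1 \<and>
                \<bar>Rval (\<lambda>k. Z k x) (\<lambda>k. W k x) (int n)\<bar> > B))"
proof -
  interpret P: prob_space M by fact
  define X where "X = (\<lambda>i. case i of Inl n \<Rightarrow> Z n | Inr n \<Rightarrow> W n)"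
  have indX: "P.indep_vars (\<lambda>_. count_space UNIV) X UNIV" using indep unfolding X_def .
  have rv: "X i \<in> measurable M (count_space UNIV)" for i
    using indX unfolding P.indep_vars_def by auto
  have mZ[measurable]: "Z n \<in> measurable M (count_space UNIV)" for n
    using rv[of "Inl n"] unfolding X_def by simp
  have mW[measurable]: "W n \<in> measurable M (count_space UNIV)" for n
    using rv[of "Inr n"] unfolding X_def by simp
  have ev[measurable]: "{x\<in>space M. Z m x > k \<and> W m x > k} \<in> sets M" for m k
    by measurable
  have pdistr: "P.prob {x\<in>space M. f x > k} = measure (distr M (count_space UNIV) f) {k<..}"
    if "f \<in> measurable M (count_space UNIV)" for f :: "'a \<Rightarrow> nat" and k
    using that by (subst measure_distr) (auto intro!: arg_cong[where f="measure M"])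
  define p where "p k = P.prob {x\<in>space M. Z 0 x > k}" for k
  have pZ: "P.prob {x\<in>space M. Z m x > k} = p k" for m k
    unfolding p_def using pdistr[of "Z m" k] pdistr[of "Z 0" k] idZ[of m] by simp
  have pW: "P.prob {x\<in>space M. W m x > k} = p k" for m k
    unfolding p_def using pdistr[of "W m" k] pdistr[of "Z 0" k] idW[of m] by simp
  define q where "q k = P.prob {x\<in>space M. Z 0 x > k \<and> W 0 x > k}" for k
  have pair: "P.prob {x\<in>space M. Z m x > k \<and> W m x > k} = p k * p k" for m k
  proof -
    have "P.prob (\<Inter>i\<in>{Inl m, Inr m}. X i -` {k<..} \<inter> space M)
        = (\<Prod>i\<in>{Inl m, Inr m}. P.prob (X i -` {k<..} \<inter> space M))"
      by (rule P.indep_varsD[OF indX]) auto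
    moreover have "(\<Inter>i\<in>{Inl m, Inr m}. X i -` {k<..} \<inter> space M) = {x\<in>space M. Z m x > k \<and> W m x > k}"
      unfolding X_def by auto
    moreover have "X (Inl m) -` {k<..} \<inter> space M = {x\<in>space M. Z m x > k}"
      unfolding X_def by auto
    moreover have "X (Inr m) -` {k<..} \<inter> space M = {x\<in>space M. W m x > k}"
      unfolding X_def by auto
    ultimately show ?thesis using pZ pW by simp
  qed
  have qm: "P.prob {x\<in>space M. Z m x > k \<and> W m x > k} = q k" for m k
    unfolding q_def by (simp only: pair)
  have q0: "q k \<ge> 0" for k unfolding q_def by simp
  have q1: "q k \<le> 1" for k unfolding q_def by simp
  have int: "(\<integral>\<^sup>+ x. ennreal (real (min (Z 0 x) (W 0 x))) \<partial>M) = (\<Sum>k. ennreal (q k))"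
  proof -
    have "(\<integral>\<^sup>+ x. ennreal (real (min (Z 0 x) (W 0 x))) \<partial>M)
        = (\<integral>\<^sup>+ x. (\<Sum>k. indicator {x\<in>space M. Z 0 x > k \<and> W 0 x > k} x) \<partial>M)"
      by (rule nn_integral_cong) (simp add: ennreal_nat_suminf indicator_def of_bool_def)
    also have "\<dots> = (\<Sum>k. (\<integral>\<^sup>+ x. indicator {x\<in>space M. Z 0 x > k \<and> W 0 x > k} x \<partial>M))"
      by (rule nn_integral_suminf) measurable
    also have "\<dots> = (\<Sum>k. ennreal (q k))"
      by (simp add: P.emeasure_eq_measure qm)
    finally show ?thesis .
  qed
  have part1: "AE x in M. \<exists>B::int. \<forall>n::nat. n \<ge> 1 \<longrightarrow>
                \<bar>Rval (\<lambda>k. Z k x) (\<lambda>k. W k x) (int n)\<bar> \<le> B"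
    if fin: "(\<integral>\<^sup>+ x. ennreal (real (min (Z 0 x) (W 0 x))) \<partial>M) < \<infinity>"
  proof -
    have sq: "summable q"
      using fin int q0 by (intro summable_suminf_not_top) auto
    define A where "A n = {x\<in>space M. Z (n+1) x > n \<and> W (n+1) x > n}" for n
    have AE1: "AE x in M. eventually (\<lambda>n. x \<in> space M - A n) sequentially"
    proof (rule borel_cantelli_AE1)
      show "A n \<in> sets M" for n unfolding A_def by measurable
      show "emeasure M (A n) < \<infinity>" for n by (simp add: less_top[symmetric])
      show "summable (\<lambda>n. measure M (A n))" unfolding A_def qm using sq .
    qed
    show ?thesis
      using AE1 AE_space
    proof eventually_elim
      case (elim x)
      then obtain N0 where N0: "\<And>n. n \<ge> N0 \<Longrightarrow> x \<notin> A n"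
        unfolding eventually_sequentially by auto
      have N: "min (Z k x) (W k x) < k" if "k \<ge> N0 + 1" for k
      proof -
        have "x \<notin> A (k - 1)" using N0 that by simp
        then show ?thesis using that elim(2) unfolding A_def by auto
      qed
      have "\<bar>Rval (\<lambda>k. Z k x) (\<lambda>k. W k x) (int n)\<bar> \<le> (\<Sum>k<N0+1. int (Z k x))" if "n \<ge> 1" for n :: nat
        using bound1[of "\<lambda>k. Z k x" "\<lambda>k. W k x" "N0 + 1" "int n"] pos[OF elim(2)] N that by auto
      then show ?case by blast
    qed
  qed
  have part2: "AE x in M. \<forall>B::int. \<exists>n::nat. n \<ge> 1 \<and>
                \<bar>Rval (\<lambda>k. Z k x) (\<lambda>k. W k x) (int n)\<bar> > B"
    if inf: "(\<integral>\<^sup>+ x. ennreal (real (min (Z 0 x) (W 0 x))) \<partial>M) = \<infinity>"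
  proof -
    have nsq: "\<not> summable q"
    proof
      assume "summable q"
      then have "(\<Sum>k. ennreal (q k)) = ennreal (suminf q)" using q0 by (intro suminf_ennreal2) auto
      then show False using inf int by simp
    qed
    have one: "AE x in M. \<exists>m\<ge>1. Z m x > m + B \<and> W m x > m + B" for B :: nat
    proof -
      define G where "G j = {x\<in>space M. \<not> (Z (Suc j) x > Suc j + B \<and> W (Suc j) x > Suc j + B)}" for j
      define H where "H = {x\<in>space M. \<not> (\<exists>m\<ge>1. Z m x > m + B \<and> W m x > m + B)}"
      have Hs[measurable]: "H \<in> sets M" unfolding H_def by measurable
      have Gs[measurable]: "G j \<in> sets M" for j unfolding G_def by measurable
      define E where "E i = {X i -` A \<inter> space M | A. A \<in> sets (count_space (UNIV::nat set))}" for i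
      have UI: "(\<Union>j. {Inl j, Inr j}) = (UNIV :: (nat + nat) set)"
        by (rule set_eqI, case_tac x) auto
      have isets: "P.indep_sets (\<lambda>j. sigma_sets (space M) (\<Union>i\<in>{Inl j, Inr j}. E i)) UNIV"
      proof (rule P.indep_sets_collect_sigma)
        show "P.indep_sets E (\<Union>j\<in>UNIV. {Inl j, Inr j})"
          using indX unfolding P.indep_vars_def2 E_def UI by simp
        show "Int_stable (E i)" for i
          unfolding Int_stable_def
        proof (intro ballI)
          fix a b assume "a \<in> E i" "b \<in> E i"
          then obtain A B where "a = X i -` A \<inter> space M" "b = X i -` B \<inter> space M"
            unfolding E_def by auto
          then have "a \<inter> b = X i -` (A \<inter> B) \<inter> space M" by auto
          moreover have "X i -` (A \<inter> B) \<inter> space M \<in> E i" unfolding E_def by (intro CollectI exI[of _ "A \<inter> B"] conjI refl) (simp_all add: sets_count_space)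
          ultimately show "a \<inter> b \<in> E i" by (simp only:)
        qed
        show "disjoint_family_on (\<lambda>j. {Inl j, Inr j}) UNIV"
          unfolding disjoint_family_on_def by auto
      qed
      have Gmem: "G j \<in> sigma_sets (space M) (\<Union>i\<in>{Inl (Suc j), Inr (Suc j)}. E i)" for j
      proof -
        let ?S = "sigma_sets (space M) (\<Union>i\<in>{Inl (Suc j), Inr (Suc j)}. E i)"
        have sub: "(\<Union>i\<in>{Inl (Suc j), Inr (Suc j)}. E i) \<subseteq> Pow (space M)"
          unfolding E_def by auto
        interpret S: sigma_algebra "space M" ?S
          using sub by (rule sigma_algebra_sigma_sets)
        have a: "Z (Suc j) -` {Suc j + B<..} \<inter> space M \<in> ?S"
        proof (rule sigma_sets.Basic, rule UN_I[of "Inl (Suc j)"])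
          show "Z (Suc j) -` {Suc j + B<..} \<inter> space M \<in> E (Inl (Suc j))"
            unfolding E_def X_def by (intro CollectI exI[of _ "{Suc j + B<..}"] conjI) (simp_all add: sets_count_space)
        qed simp
        have b: "W (Suc j) -` {Suc j + B<..} \<inter> space M \<in> ?S"
        proof (rule sigma_sets.Basic, rule UN_I[of "Inr (Suc j)"])
          show "W (Suc j) -` {Suc j + B<..} \<inter> space M \<in> E (Inr (Suc j))"
            unfolding E_def X_def by (intro CollectI exI[of _ "{Suc j + B<..}"] conjI) (simp_all add: sets_count_space)
        qed simp
        have "G j = space M - ((Z (Suc j) -` {Suc j + B<..} \<inter> space M) \<inter> (W (Suc j) -` {Suc j + B<..} \<inter> space M))"
          unfolding G_def by auto
        moreover have "space M - ((Z (Suc j) -` {Suc j + B<..} \<inter> space M) \<inter> (W (Suc j) -` {Suc j + B<..} \<inter> space M)) \<in> ?S"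
          by (rule S.compl_sets, rule S.Int[OF a b])
        ultimately show ?thesis by (simp only:)
      qed
      have prodG: "P.prob (\<Inter>j\<in>{..<n}. G j) = (\<Prod>j\<in>{..<n}. (1 - q (j + Suc B)))" if "n > 0" for n
      proof -
        have "P.prob (\<Inter>j\<in>{..<n}. G j) = (\<Prod>j\<in>{..<n}. P.prob (G j))"
        proof -
          have "(\<Inter>j\<in>{..<n}. G j) = (\<Inter>m\<in>Suc ` {..<n}. G (m - 1))" by auto
          moreover have "P.prob (\<Inter>m\<in>Suc ` {..<n}. G (m - 1)) = (\<Prod>m\<in>Suc ` {..<n}. P.prob (G (m - 1)))"
          proof (rule P.indep_setsD[OF isets])
            show "Suc ` {..<n} \<noteq> {}" using that by auto
            show "\<forall>j\<in>Suc ` {..<n}. G (j - 1) \<in> sigma_sets (space M) (\<Union>i\<in>{Inl j, Inr j}. E i)"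
            proof
              fix j assume "j \<in> Suc ` {..<n}"
              then obtain k where "j = Suc k" by auto
              then show "G (j - 1) \<in> sigma_sets (space M) (\<Union>i\<in>{Inl j, Inr j}. E i)"
                using Gmem[of k] by simp
            qed
          qed auto
          moreover have "(\<Prod>m\<in>Suc ` {..<n}. P.prob (G (m - 1))) = (\<Prod>j\<in>{..<n}. P.prob (G j))"
            by (subst prod.reindex) auto
          ultimately show ?thesis by simp
        qed
        moreover have "P.prob (G j) = 1 - q (j + Suc B)" for j
        proof -
          have "G j = space M - {x\<in>space M. Z (Suc j) x > j + Suc B \<and> W (Suc j) x > j + Suc B}"
            unfolding G_def by auto
          then show ?thesis using qm by (simp add: P.prob_compl)
        qed
        ultimately show ?thesis by simp
      qed
      define f where "f j = q (j + Suc B)" for j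
      have f0: "f j \<ge> 0" for j unfolding f_def using q0 .
      have nsf: "\<not> summable f" unfolding f_def using nsq summable_iff_shift[of q "Suc B"] by simp
      have unb: "\<exists>n. (\<Sum>j<n. f j) > C" for C :: real
      proof (rule ccontr)
        assume "\<not> ?thesis"
        then have "(\<Sum>j<n. f j) \<le> C" for n by (simp add: not_less)
        then have "summable f" using f0 by (intro summableI_nonneg_bounded) auto
        then show False using nsf by simp
      qed
      have Hle: "P.prob H \<le> exp (- (\<Sum>j<n. f j))" if "n > 0" for n
      proof -
        have "H \<subseteq> (\<Inter>j\<in>{..<n}. G j)"
        proof
          fix x assume "x \<in> H"
          then have x: "x \<in> space M" "\<And>m. m \<ge> 1 \<Longrightarrow> \<not> (Z m x > m + B \<and> W m x > m + B)"
            unfolding H_def by auto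
          show "x \<in> (\<Inter>j\<in>{..<n}. G j)"
            unfolding G_def using x(1) x(2)[of "Suc _"] by simp
        qed
        moreover have "(\<Inter>j\<in>{..<n}. G j) \<in> sets M"
          using that Gs by (intro sets.finite_INT) auto
        ultimately have "P.prob H \<le> P.prob (\<Inter>j\<in>{..<n}. G j)"
          by (rule P.finite_measure_mono)
        also have "\<dots> = (\<Prod>j<n. 1 - f j)" using prodG[OF that] unfolding f_def by simp
        also have "\<dots> \<le> (\<Prod>j<n. exp (- f j))"
        proof (rule prod_mono)
          fix j
          have "1 + (- f j) \<le> exp (- f j)" by (rule exp_ge_add_one_self)
          then show "0 \<le> 1 - f j \<and> 1 - f j \<le> exp (- f j)" using q1[of "j + Suc B"] unfolding f_def by simp
        qed
        also have "\<dots> = exp (- (\<Sum>j<n. f j))"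
          by (simp add: exp_sum[symmetric] sum_negf)
        finally show ?thesis .
      qed
      have "P.prob H = 0"
      proof (rule ccontr)
        assume "P.prob H \<noteq> 0"
        then have ph: "P.prob H > 0" using measure_nonneg[of M H] by linarith
        obtain n where n: "(\<Sum>j<n. f j) > max 0 (- ln (P.prob H))" using unb by blast
        then have "n > 0" by (cases n) simp_all
        have "exp (- (\<Sum>j<n. f j)) < exp (ln (P.prob H))" using n by simp
        then have "exp (- (\<Sum>j<n. f j)) < P.prob H" using ph by simp
        then show False using Hle[OF \<open>n > 0\<close>] by simp
      qed
      then have "emeasure M H = 0" by (simp add: P.emeasure_eq_measure)
      moreover have "{x\<in>space M. \<not> (\<exists>m\<ge>1. Z m x > m + B \<and> W m x > m + B)} = H"
        unfolding H_def ..
      ultimately show ?thesis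
        using AE_iff_measurable[OF Hs, of "\<lambda>x. \<exists>m\<ge>1. Z m x > m + B \<and> W m x > m + B"] by simp
    qed
    have "AE x in M. \<forall>B::nat. \<exists>m\<ge>1. Z m x > m + B \<and> W m x > m + B"
      using one by (simp add: AE_all_countable)
    then show ?thesis
      using AE_space
    proof eventually_elim
      case (elim x)
      show ?case
      proof
        fix B :: int
        obtain m where m: "m \<ge> 1" "Z m x > m + nat B" "W m x > m + nat B"
          using elim(1) by blast
        have r: "\<bar>Rval (\<lambda>k. Z k x) (\<lambda>k. W k x) (int m)\<bar> > int (nat B)"
          using m by (intro bound2) auto
        have hB: "B \<le> int (nat B)" by simp
        have r2: "\<bar>Rval (\<lambda>k. Z k x) (\<lambda>k. W k x) (int m)\<bar> > B"
          using order_le_less_trans[OF hB r] .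
        then show "\<exists>n::nat. n \<ge> 1 \<and> \<bar>Rval (\<lambda>k. Z k x) (\<lambda>k. W k x) (int n)\<bar> > B"
          using m r2 by (intro exI[of _ m]) simp
      qed
    qed
  qed
  show ?thesis using part1 part2 by blast
qed

end
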